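(* Let $I$ be a real interval centered at $0$ with $[-1,1]\subseteq I$, and let $f\colon I^n\to\mathbb{R}$ be such that $f|_{I_+^n}$ or $f|_{I_-^n}$ is nonconstant. The following are equivalent: (i) $f$ is a symmetric quasi-Lovász extension and there exists $A\subseteq[n]$ with $f_0(\mathbf{1}_A)\neq 0$; (ii) $f$ is comonotonically modular and $f_0$ is oddly homogeneous; (iii) there exists a nondecreasing odd function $\varphi_f\colon I\to\mathbb{R}$ with $\varphi_f(1)=1$ such that $f=\check{L}_{f|_{\{0,1\}^n}}\circ\varphi_f$, i.e. $f(\mathbf{x})=\check{L}_{f|_{\{0,1\}^n}}(\varphi_f(x_1),\ldots,\varphi_f(x_n))$ for all $\mathbf{x}\in I^n$.
   Context: Notation: $[n]=\{1,\ldots,n\}$; $I_+=I\cap[0,\infty[$, $I_-=I\cap\,]-\infty,0]$; $\mathbf{1}_A$ is the indicator tuple of $A\subseteq[n]$, $\mathbf{0}=\mathbf{1}_\varnothing$; for a function $g$, $g_0=g-g(\mathbf{0})$; $\mathbf{x}^+$ has components $\max(x_i,0)$, $\mathbf{x}^-=(-\mathbf{x})^+$. For $\sigma$ a permutation of $[n]$, $\mathbb{R}^n_\sigma=\{\mathbf{x}: x_{\sigma(1)}\leq\cdots\leq x_{\sigma(n)}\}$, $A^\uparrow_\sigma(i)=\{\sigma(i),\ldots,\sigma(n)\}$, $A^\uparrow_\sigma(n+1)=\varnothing$. The Lovász extension $L_\psi\colon\mathbb{R}^n\to\mathbb{R}$ of $\psi\colon\{0,1\}^n\to\mathbb{R}$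 is the function whose restriction to each $\mathbb{R}^n_\sigma$ is the unique affine function agreeing with $\psi$ at the points $\mathbf{1}_{A^\uparrow_\sigma(k)}$, $k\in[n+1]$. The symmetric Lovász extension of $\psi$ is $\check{L}_\psi(\mathbf{x})=\psi(\mathbf{0})+L_\psi(\mathbf{x}^+)-L_\psi(\mathbf{x}^-)$; a symmetric Lovász extension is any $\check{L}_\psi$. A symmetric quasi-Lovász extension is $f(\mathbf{x})=\check{L}(\varphi(x_1),\ldots,\varphi(x_n))$ with $\check{L}$ a symmetric Lovász extension and $\varphi\colon I\to\mathbb{R}$ nondecreasing and odd. Comonotonic: $\mathbf{x},\mathbf{x}'\in I^n\cap\mathbb{R}^n_\sigma$ for some $\sigma$. Comonotonically modular: $f(\mathbf{x})+f(\mathbf{x}')=f(\mathbf{x}\wedge\mathbf{x}')+f(\mathbf{x}\vee\mathbf{x}')$ for all comonotonic $\mathbf{x},\mathbf{x}'$ ($\wedge,\vee$ componentwise). A function $g\colon I^n\to\mathbb{R}$ is oddly homogeneous if there exists a nondecreasing odd $\phi\colon I\to\mathbb{R}$ with $g(x\mathbf{1}_A)=\phi(x)g(\mathbf{1}_A)$ for all $x\in I$, $A\subseteq[n]$. *)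

theory Defs
  imports "HOL-Analysis.Analysis"
begin

(* Vectors in R^n are functions 'n => real for a finite index type 'n; [n] = UNIV,
   n = CARD('n). A permutation sigma of [n] is a bijection {1..n} -> UNIV. *)

definition perm_idx :: "(nat \<Rightarrow> 'n::finite) \<Rightarrow> bool" where
  "perm_idx \<sigma> \<longleftrightarrow> bij_betw \<sigma> {1..CARD('n)} UNIV"

definition cone :: "(nat \<Rightarrow> 'n::finite) \<Rightarrow> ('n \<Rightarrow> real) set" where
  "cone \<sigma> = {x. \<forall>i j. 1 \<le> i \<longrightarrow> i \<le> j \<longrightarrow> j \<le> CARD('n) \<longrightarrow> x (\<sigma> i) \<le> x (\<sigma> j)}"

(* A^uparrow_sigma(i) = {sigma(i),...,sigma(n)}; for i = n+1 this is empty *)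
definition Aup :: "(nat \<Rightarrow> 'n::finite) \<Rightarrow> nat \<Rightarrow> 'n set" where
  "Aup \<sigma> i = \<sigma> ` {i..CARD('n)}"

definition ind :: "'n set \<Rightarrow> 'n \<Rightarrow> real" where
  "ind A = (\<lambda>j. if j \<in> A then 1 else 0)"

definition affine_fun :: "(('n::finite \<Rightarrow> real) \<Rightarrow> real) \<Rightarrow> bool" where
  "affine_fun g \<longleftrightarrow> (\<exists>c a. \<forall>x. g x = c + (\<Sum>j\<in>UNIV. a j * x j))"

(* L is a Lovasz extension of psi (psi only matters on {0,1}^n) *)
definition is_lovasz_ext :: "(('n::finite \<Rightarrow> real) \<Rightarrow> real) \<Rightarrow> (('n \<Rightarrow> real) \<Rightarrow> real) \<Rightarrow> bool" where
  "is_lovasz_ext \<psi> L \<longleftrightarrow>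
     (\<forall>\<sigma>. perm_idx \<sigma> \<longrightarrow>
        (\<exists>g. affine_fun g \<and>
             (\<forall>k\<in>{1..CARD('n)+1}. g (ind (Aup \<sigma> k)) = \<psi> (ind (Aup \<sigma> k))) \<and>
             (\<forall>x\<in>cone \<sigma>. L x = g x)))"

definition lovasz :: "(('n::finite \<Rightarrow> real) \<Rightarrow> real) \<Rightarrow> ('n \<Rightarrow> real) \<Rightarrow> real" where
  "lovasz \<psi> = (THE L. is_lovasz_ext \<psi> L)"

definition pos_part :: "('n \<Rightarrow> real) \<Rightarrow> 'n \<Rightarrow> real" where
  "pos_part x = (\<lambda>j. max (x j) 0)"

definition neg_part :: "('n \<Rightarrow> real) \<Rightarrow> 'n \<Rightarrow> real" where
  "neg_part x = pos_part (\<lambda>j. - x j)"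

definition sym_lovasz :: "(('n::finite \<Rightarrow> real) \<Rightarrow> real) \<Rightarrow> ('n \<Rightarrow> real) \<Rightarrow> real" where
  "sym_lovasz \<psi> x = \<psi> (ind {}) + lovasz \<psi> (pos_part x) - lovasz \<psi> (neg_part x)"

definition odd_on :: "real set \<Rightarrow> (real \<Rightarrow> real) \<Rightarrow> bool" where
  "odd_on I \<phi> \<longleftrightarrow> (\<forall>x\<in>I. \<phi> (- x) = - \<phi> x)"

definition cube :: "real set \<Rightarrow> ('n \<Rightarrow> real) set" where
  "cube I = {x. \<forall>j. x j \<in> I}"

definition sym_quasi_lovasz :: "real set \<Rightarrow> (('n::finite \<Rightarrow> real) \<Rightarrow> real) \<Rightarrow> bool" where
  "sym_quasi_lovasz I f \<longleftrightarrow>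
     (\<exists>\<psi> \<phi>. mono_on I \<phi> \<and> odd_on I \<phi> \<and>
        (\<forall>x\<in>cube I. f x = sym_lovasz \<psi> (\<phi> \<circ> x)))"

definition comonotonic_modular :: "real set \<Rightarrow> (('n::finite \<Rightarrow> real) \<Rightarrow> real) \<Rightarrow> bool" where
  "comonotonic_modular I f \<longleftrightarrow>
     (\<forall>\<sigma> x x'. perm_idx \<sigma> \<longrightarrow> x \<in> cube I \<inter> cone \<sigma> \<longrightarrow> x' \<in> cube I \<inter> cone \<sigma> \<longrightarrow>
        f x + f x' = f (\<lambda>j. min (x j) (x' j)) + f (\<lambda>j. max (x j) (x' j)))"

definition oddly_homogeneous :: "real set \<Rightarrow> (('n::finite \<Rightarrow> real) \<Rightarrow> real) \<Rightarrow> bool" where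
  "oddly_homogeneous I g \<longleftrightarrow>
     (\<exists>\<phi>. mono_on I \<phi> \<and> odd_on I \<phi> \<and>
        (\<forall>x\<in>I. \<forall>A. g (\<lambda>j. x * ind A j) = \<phi> x * g (ind A)))"

definition f0 :: "(('n \<Rightarrow> real) \<Rightarrow> real) \<Rightarrow> ('n \<Rightarrow> real) \<Rightarrow> real" where
  "f0 f = (\<lambda>x. f x - f (ind {}))"

definition nonconst_on :: "('a \<Rightarrow> real) \<Rightarrow> 'a set \<Rightarrow> bool" where
  "nonconst_on f S \<longleftrightarrow> (\<exists>x\<in>S. \<exists>y\<in>S. f x \<noteq> f y)"

end

theory Submission
  imports Defs
begin


definition mob :: "(('n::finite \<Rightarrow> real) \<Rightarrow> real) \<Rightarrow> 'n set \<Rightarrow> real" where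
  "mob \<psi> S = (-1)^card S * (\<Sum>T\<in>Pow S. (-1)^card T * \<psi> (ind T))"

definition LM :: "(('n::finite \<Rightarrow> real) \<Rightarrow> real) \<Rightarrow> ('n \<Rightarrow> real) \<Rightarrow> real" where
  "LM \<psi> x = \<psi> (ind {}) + (\<Sum>S\<in>{S. S \<noteq> {}}. mob \<psi> S * Min (x ` S))"

lemma mob_sum: "(\<Sum>T\<in>Pow A. mob \<psi> T) = \<psi> (ind (A::'n::finite set))"
proof -
  have "\<psi> (ind A) = (\<Sum>T\<in>Pow A. (-1)^card T * (\<Sum>U\<in>Pow T. (-1)^card U * \<psi> (ind U)))"
    by (rule inclusion_exclusion_symmetric[where f="\<lambda>T. \<psi> (ind T)"]) auto
  also have "\<dots> = (\<Sum>T\<in>Pow A. mob \<psi> T)" by (simp add: mob_def)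
  finally show ?thesis by simp
qed

lemma mob_empty: "mob \<psi> {} = \<psi> (ind {})"
  by (simp add: mob_def)

lemma Min_ind: assumes "S \<noteq> {}"
  shows "Min (ind A ` (S::'n::finite set)) = (if S \<subseteq> A then 1 else 0)"
proof (cases "S \<subseteq> A")
  case True
  then have "ind A ` S = {1}" using assms by (auto simp: ind_def)
  then show ?thesis using True by simp
next
  case False
  then obtain j where "j \<in> S" "j \<notin> A" by auto
  have "Min (ind A ` S) = 0"
    by (rule Min_eqI) (use \<open>j \<in> S\<close> \<open>j \<notin> A\<close> in \<open>auto simp: ind_def\<close>)
  then show ?thesis using False by simp
qed

lemma LM_ind: "LM \<psi> (ind (A::'n::finite set)) = \<psi> (ind A)"
proof -
  have "(\<Sum>S\<in>{S. S \<noteq> {}}. mob \<psi> S * Min (ind A ` S)) = (\<Sum>S\<in>{S::'n set. S \<noteq> {}}. if S \<subseteq> A then mob \<psi> S else 0)"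
    by (rule sum.cong) (auto simp: Min_ind)
  also have "\<dots> = (\<Sum>S\<in>{S. S \<noteq> {} \<and> S \<subseteq> A}. mob \<psi> S)"
  proof -
    have e: "{S. S \<noteq> {} \<and> S \<subseteq> A} = {S \<in> {S. S \<noteq> {}}. S \<subseteq> A}" by auto
    show ?thesis unfolding e using sum.inter_filter[of "{S. S \<noteq> {}}" "mob \<psi>" "\<lambda>S. S \<subseteq> A"] by simp
  qed
  also have "\<dots> = (\<Sum>S\<in>Pow A. mob \<psi> S) - mob \<psi> {}"
  proof -
    have "Pow A = insert {} {S. S \<noteq> {} \<and> S \<subseteq> A}" by auto
    then show ?thesis by (simp add: sum.insert)
  qed
  finally show ?thesis by (simp add: LM_def mob_sum mob_empty)
qed

lemma Min_scale: assumes "S \<noteq> {}" "0 \<le> r"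
  shows "Min ((\<lambda>j. r * (x::'n\<Rightarrow>real) j) ` (S::'n::finite set)) = r * Min (x ` S)"
proof -
  have "mono (\<lambda>y::real. r * y)" using assms by (auto intro: monoI mult_left_mono)
  then have "(\<lambda>y. r * y) (Min (x ` S)) = Min ((\<lambda>y. r * y) ` (x ` S))"
    by (rule mono_Min_commute) (use assms in auto)
  then show ?thesis by (simp add: image_image)
qed

lemma LM_ray: assumes "0 \<le> r"
  shows "LM \<psi> (\<lambda>j. r * ind (A::'n::finite set) j) = \<psi> (ind {}) + r * (\<psi> (ind A) - \<psi> (ind {}))"
proof -
  have "(\<Sum>S\<in>{S. S \<noteq> {}}. mob \<psi> S * Min ((\<lambda>j. r * ind A j) ` S))
      = r * (\<Sum>S\<in>{S. S \<noteq> {}}. mob \<psi> S * Min (ind A ` S))"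
    by (simp add: sum_distrib_left Min_scale assms mult_ac)
  also have "\<dots> = r * (\<psi> (ind A) - \<psi> (ind {}))"
    using LM_ind[of \<psi> A] by (simp add: LM_def)
  finally show ?thesis by (simp add: LM_def)
qed

lemma sort_perm: "\<exists>\<sigma>. perm_idx \<sigma> \<and> (x::'n::finite \<Rightarrow> real) \<in> cone \<sigma>"
proof -
  obtain xs :: "'n list" where xs: "set xs = UNIV" "distinct xs"
    using finite_distinct_list[of "UNIV::'n set"] by auto
  define ys where "ys = sort_key x xs"
  have ys: "set ys = UNIV" "distinct ys" "sorted (map x ys)" using xs by (auto simp: ys_def)
  have len: "length ys = CARD('n)" using distinct_card[OF ys(2)] ys(1) by simp
  define \<sigma> where "\<sigma> = (\<lambda>k. ys ! (k - 1))"
  have "bij_betw \<sigma> {1..CARD('n)} UNIV"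
  proof (rule bij_betw_imageI)
    show "inj_on \<sigma> {1..CARD('n)}"
    proof (rule inj_onI)
      fix k l assume kl: "k \<in> {1..CARD('n)}" "l \<in> {1..CARD('n)}" "\<sigma> k = \<sigma> l"
      then have "k - 1 = l - 1" using nth_eq_iff_index_eq[OF ys(2)] len by (auto simp: \<sigma>_def)
      then show "k = l" using kl by auto
    qed
    show "\<sigma> ` {1..CARD('n)} = UNIV"
    proof
      show "UNIV \<subseteq> \<sigma> ` {1..CARD('n)}"
      proof
        fix j :: 'n
        have "j \<in> set ys" using ys by auto
        then obtain i where "i < length ys" "ys ! i = j" by (auto simp: in_set_conv_nth)
        then show "j \<in> \<sigma> ` {1..CARD('n)}" using len
          by (auto simp: \<sigma>_def image_iff intro!: bexI[of _ "Suc i"])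
      qed
    qed auto
  qed
  moreover have "x \<in> cone \<sigma>"
    unfolding cone_def \<sigma>_def
  proof (intro CollectI allI impI)
    fix i j :: nat assume ij: "1 \<le> i" "i \<le> j" "j \<le> CARD('n)"
    then have "map x ys ! (i - 1) \<le> map x ys ! (j - 1)"
      by (intro sorted_nth_mono[OF ys(3)]) (auto simp: len)
    then show "x (ys ! (i - 1)) \<le> x (ys ! (j - 1))" using ij len by simp
  qed
  ultimately show ?thesis by (auto simp: perm_idx_def)
qed

lemma perm_surj: assumes "perm_idx (\<sigma>::nat \<Rightarrow> 'n::finite)"
  obtains k where "k \<in> {1..CARD('n)}" "\<sigma> k = j"
proof -
  have "\<sigma> ` {1..CARD('n)} = UNIV" using assms by (simp add: perm_idx_def bij_betw_def)
  then have "j \<in> \<sigma> ` {1..CARD('n)}" by simp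
  then show ?thesis using that by blast
qed

lemma perm_inj: assumes "perm_idx (\<sigma>::nat \<Rightarrow> 'n::finite)" "i \<in> {1..CARD('n)}" "l \<in> {1..CARD('n)}" "\<sigma> i = \<sigma> l"
  shows "i = l"
  using assms by (auto simp: perm_idx_def bij_betw_def dest: inj_onD)

lemma Aup_mem: assumes "perm_idx (\<sigma>::nat \<Rightarrow> 'n::finite)" "i \<in> {1..CARD('n)}" "k \<ge> 1"
  shows "(\<sigma> i \<in> Aup \<sigma> k) \<longleftrightarrow> k \<le> i"
proof
  assume "\<sigma> i \<in> Aup \<sigma> k"
  then obtain l where l: "l \<in> {k..CARD('n)}" "\<sigma> i = \<sigma> l" by (auto simp: Aup_def)
  then have "i = l" using perm_inj[OF assms(1) assms(2), of l] assms(3) by auto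
  then show "k \<le> i" using l by auto
next
  assume "k \<le> i" then show "\<sigma> i \<in> Aup \<sigma> k" using assms by (auto simp: Aup_def)
qed

lemma chain_in_cone: assumes "perm_idx (\<sigma>::nat \<Rightarrow> 'n::finite)" "k \<ge> 1"
  shows "ind (Aup \<sigma> k) \<in> cone \<sigma>"
  unfolding cone_def
proof (intro CollectI allI impI)
  fix i j :: nat assume ij: "1 \<le> i" "i \<le> j" "j \<le> CARD('n)"
  then show "ind (Aup \<sigma> k) (\<sigma> i) \<le> ind (Aup \<sigma> k) (\<sigma> j)"
    using Aup_mem[OF assms(1), of i k] Aup_mem[OF assms(1), of j k] assms(2)
    by (auto simp: ind_def)
qed

lemma affine_diff: "affine_fun g \<Longrightarrow> affine_fun h \<Longrightarrow> affine_fun (\<lambda>x. g x - h x)"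
  unfolding affine_fun_def
proof (elim exE)
  fix c a d b
  assume g: "\<forall>x. g x = c + (\<Sum>j\<in>UNIV. a j * x j)" and h: "\<forall>x. h x = d + (\<Sum>j\<in>UNIV. b j * x j)"
  show "\<exists>c a. \<forall>x. g x - h x = c + (\<Sum>j\<in>UNIV. a j * x j)"
    by (rule exI[of _ "c - d"], rule exI[of _ "\<lambda>j. a j - b j"])
       (simp add: g h algebra_simps sum_subtractf)
qed

lemma affine_zero:
  assumes "affine_fun h" "perm_idx (\<sigma>::nat \<Rightarrow> 'n::finite)"
    "\<forall>k\<in>{1..CARD('n)+1}. h (ind (Aup \<sigma> k)) = 0"
  shows "h x = 0"
proof -
  obtain c a where h: "\<And>x. h x = c + (\<Sum>j\<in>UNIV. a j * x j)"
    using assms(1) unfolding affine_fun_def by auto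
  have "Aup \<sigma> (CARD('n)+1) = {}" by (simp add: Aup_def)
  then have "h (ind {}) = 0" using bspec[OF assms(3), of "CARD('n)+1"] by simp
  then have c: "c = 0" by (simp add: h ind_def)
  have a: "a j = 0" for j
  proof -
    obtain k where k: "k \<in> {1..CARD('n)}" "\<sigma> k = j" using perm_surj[OF assms(2)] by blast
    have eq: "ind (Aup \<sigma> k) i = ind (Aup \<sigma> (k+1)) i + (if i = j then 1 else 0)" for i
    proof -
      obtain m where m: "m \<in> {1..CARD('n)}" "\<sigma> m = i" using perm_surj[OF assms(2)] by blast
      have "(\<sigma> m = \<sigma> k) \<longleftrightarrow> m = k" using perm_inj[OF assms(2) m(1) k(1)] by auto
      then show ?thesis using Aup_mem[OF assms(2) m(1), of k] Aup_mem[OF assms(2) m(1), of "k+1"] k m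
        by (auto simp: ind_def)
    qed
    have d: "\<And>i. a i * (if i = j then 1 else 0) = (if i = j then a i else 0)" by simp
    have "h (ind (Aup \<sigma> k)) = h (ind (Aup \<sigma> (k+1))) + a j"
      by (simp add: h eq distrib_left sum.distrib d)
    moreover have "h (ind (Aup \<sigma> k)) = 0" "h (ind (Aup \<sigma> (k+1))) = 0" using assms(3) k by auto
    ultimately show ?thesis by simp
  qed
  show ?thesis by (simp add: h c a)
qed

definition Jx :: "(nat \<Rightarrow> 'n::finite) \<Rightarrow> 'n set \<Rightarrow> 'n" where
  "Jx \<sigma> S = \<sigma> (Min {k \<in> {1..CARD('n)}. \<sigma> k \<in> S})"

lemma Jx_prop: assumes "perm_idx (\<sigma>::nat \<Rightarrow> 'n::finite)" "S \<noteq> {}"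
  shows "Jx \<sigma> S \<in> S" and "x \<in> cone \<sigma> \<Longrightarrow> i \<in> S \<Longrightarrow> x (Jx \<sigma> S) \<le> x i"
proof -
  define K where "K = {k \<in> {1..CARD('n)}. \<sigma> k \<in> S}"
  have fK: "finite K" by (simp add: K_def)
  obtain s where "s \<in> S" using assms by auto
  then obtain k where "k \<in> {1..CARD('n)}" "\<sigma> k = s" using perm_surj[OF assms(1)] by blast
  then have "K \<noteq> {}" using \<open>s \<in> S\<close> by (auto simp: K_def)
  then have MK: "Min K \<in> K" using fK by (rule Min_in[rotated])
  then show "Jx \<sigma> S \<in> S" unfolding Jx_def K_def by auto
  assume x: "x \<in> cone \<sigma>" and i: "i \<in> S"
  obtain l where l: "l \<in> {1..CARD('n)}" "\<sigma> l = i" using perm_surj[OF assms(1)] by blast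
  then have "l \<in> K" using i by (auto simp: K_def)
  then have "Min K \<le> l" using fK by simp
  have "1 \<le> Min K" using MK by (simp add: K_def)
  then show "x (Jx \<sigma> S) \<le> x i" using x l \<open>Min K \<le> l\<close> unfolding cone_def Jx_def K_def[symmetric] by auto
qed

lemma LM_cone: assumes "perm_idx (\<sigma>::nat \<Rightarrow> 'n::finite)" "x \<in> cone \<sigma>"
  shows "LM \<psi> x = \<psi> (ind {}) + (\<Sum>S\<in>{S. S \<noteq> {}}. mob \<psi> S * x (Jx \<sigma> S))"
proof -
  have "Min (x ` S) = x (Jx \<sigma> S)" if "S \<noteq> {}" for S
    by (rule Min_eqI) (use Jx_prop[OF assms(1) that] assms(2) in auto)
  then show ?thesis by (simp add: LM_def)
qed

lemma affine_J: assumes fP: "finite P" shows "affine_fun (\<lambda>x. c + (\<Sum>S\<in>P. b S * x (J S :: 'n::finite)))"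
  unfolding affine_fun_def
proof (intro exI allI)
  fix x :: "'n \<Rightarrow> real"
  have "(\<Sum>j\<in>UNIV. (\<Sum>S\<in>{S \<in> P. J S = j}. b S) * x j) = (\<Sum>j\<in>UNIV. \<Sum>S\<in>{S \<in> P. J S = j}. b S * x (J S))"
    by (rule sum.cong) (auto simp: sum_distrib_right)
  also have "\<dots> = (\<Sum>S\<in>P. b S * x (J S))"
    by (rule sum.group) (auto intro: fP)
  finally show "c + (\<Sum>S\<in>P. b S * x (J S)) = c + (\<Sum>j\<in>UNIV. (\<Sum>S\<in>{S \<in> P. J S = j}. b S) * x j)"
    by simp
qed

lemma LM_ext: "is_lovasz_ext \<psi> (LM \<psi>)"
  unfolding is_lovasz_ext_def
proof (intro allI impI)
  fix \<sigma> :: "nat \<Rightarrow> 'a" assume s: "perm_idx \<sigma>"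
  let ?g = "\<lambda>x. \<psi> (ind {}) + (\<Sum>S\<in>{S. S \<noteq> {}}. mob \<psi> S * x (Jx \<sigma> S))"
  show "\<exists>g. affine_fun g \<and> (\<forall>k\<in>{1..CARD('a) + 1}. g (ind (Aup \<sigma> k)) = \<psi> (ind (Aup \<sigma> k))) \<and>
            (\<forall>x\<in>cone \<sigma>. LM \<psi> x = g x)"
  proof (intro exI conjI ballI)
    show "affine_fun ?g" by (rule affine_J) simp
    fix k assume "k \<in> {1..CARD('a) + 1}"
    then have "ind (Aup \<sigma> k) \<in> cone \<sigma>" using chain_in_cone[OF s] by auto
    then show "?g (ind (Aup \<sigma> k)) = \<psi> (ind (Aup \<sigma> k))"
      using LM_cone[OF s, of _ \<psi>] LM_ind[of \<psi>] by metis
  next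
    fix x assume "x \<in> cone \<sigma>" then show "LM \<psi> x = ?g x" by (rule LM_cone[OF s])
  qed
qed

lemma lovasz_eq: "lovasz \<psi> = LM (\<psi> :: ('n::finite \<Rightarrow> real) \<Rightarrow> real)"
  unfolding lovasz_def
proof (rule the_equality)
  show "is_lovasz_ext \<psi> (LM \<psi>)" by (rule LM_ext)
  fix L assume L: "is_lovasz_ext \<psi> L"
  show "L = LM \<psi>"
  proof
    fix x :: "'n \<Rightarrow> real"
    obtain \<sigma> where s: "perm_idx \<sigma>" "x \<in> cone \<sigma>" using sort_perm by blast
    obtain g where g: "affine_fun g" "\<forall>k\<in>{1..CARD('n)+1}. g (ind (Aup \<sigma> k)) = \<psi> (ind (Aup \<sigma> k))"
      "\<forall>x\<in>cone \<sigma>. L x = g x" using L s(1) unfolding is_lovasz_ext_def by blast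
    obtain g' where g': "affine_fun g'" "\<forall>k\<in>{1..CARD('n)+1}. g' (ind (Aup \<sigma> k)) = \<psi> (ind (Aup \<sigma> k))"
      "\<forall>x\<in>cone \<sigma>. LM \<psi> x = g' x" using LM_ext[of \<psi>] s(1) unfolding is_lovasz_ext_def by blast
    have "(\<lambda>x. g x - g' x) x = 0"
      by (rule affine_zero[OF affine_diff[OF g(1) g'(1)] s(1)]) (use g(2) g'(2) in auto)
    then show "L x = LM \<psi> x" using g(3) g'(3) s(2) by auto
  qed
qed

definition comon :: "('n \<Rightarrow> real) \<Rightarrow> ('n \<Rightarrow> real) \<Rightarrow> bool" where
  "comon x y \<longleftrightarrow> (\<forall>i j. 0 \<le> (x i - x j) * (y i - y j))"

lemma comon_le: assumes "comon x y" "x i < x j" shows "y i \<le> y j"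
proof (rule ccontr)
  assume "\<not> y i \<le> y j"
  then have "(x i - x j) * (y i - y j) < 0" using assms(2) by (intro mult_neg_pos) auto
  then show False using assms(1) unfolding comon_def by (meson not_le)
qed

lemma cone_comon: assumes "perm_idx (\<sigma>::nat \<Rightarrow> 'n::finite)" "x \<in> cone \<sigma>" "y \<in> cone \<sigma>"
  shows "comon x y"
  unfolding comon_def
proof (intro allI)
  fix i j :: 'n
  obtain p where p: "p \<in> {1..CARD('n)}" "\<sigma> p = i" using perm_surj[OF assms(1)] by blast
  obtain q where q: "q \<in> {1..CARD('n)}" "\<sigma> q = j" using perm_surj[OF assms(1)] by blast
  show "0 \<le> (x i - x j) * (y i - y j)"
  proof (cases "p \<le> q")
    case True
    then have "x i \<le> x j" "y i \<le> y j" using assms(2,3) p q unfolding cone_def by auto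
    then show ?thesis by (intro mult_nonpos_nonpos) auto
  next
    case False
    then have "x j \<le> x i" "y j \<le> y i" using assms(2,3) p q unfolding cone_def by auto
    then show ?thesis by (intro mult_nonneg_nonneg) auto
  qed
qed

lemma comon_mono: assumes "comon x y" "\<forall>j. x j \<in> D" "\<forall>j. y j \<in> D" "mono_on D h"
  shows "comon (\<lambda>j. h (x j)) (\<lambda>j. h (y j))"
  unfolding comon_def
proof (intro allI)
  fix i j
  consider "x i < x j" | "x i = x j" | "x j < x i" by linarith
  then show "0 \<le> (h (x i) - h (x j)) * (h (y i) - h (y j))"
  proof cases
    case 1
    then have "y i \<le> y j" using comon_le[OF assms(1)] by auto
    then have "h (x i) \<le> h (x j)" "h (y i) \<le> h (y j)" using 1 assms(2-4)
      by (auto intro: mono_onD)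
    then show ?thesis by (intro mult_nonpos_nonpos) auto
  next
    case 2 then show ?thesis by simp
  next
    case 3
    then have "y j \<le> y i" using comon_le[OF assms(1)] by auto
    then have "h (x j) \<le> h (x i)" "h (y j) \<le> h (y i)" using 3 assms(2-4)
      by (auto intro: mono_onD)
    then show ?thesis by (intro mult_nonneg_nonneg) auto
  qed
qed

lemma comon_pos: "comon x y \<Longrightarrow> comon (pos_part x) (pos_part y)"
  unfolding pos_part_def
  by (rule comon_mono[where D=UNIV]) (auto intro: mono_onI)

lemma comon_uminus: "comon x y \<Longrightarrow> comon (\<lambda>j. - x j) (\<lambda>j. - y j)"
  unfolding comon_def
proof (intro allI)
  fix i j assume "\<forall>i j. 0 \<le> (x i - x j) * (y i - y j)"
  moreover have "(- x i - - x j) * (- y i - - y j) = (x i - x j) * (y i - y j)" by algebra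
  ultimately show "0 \<le> (- x i - - x j) * (- y i - - y j)" by simp
qed

lemma comon_neg: "comon x y \<Longrightarrow> comon (neg_part x) (neg_part y)"
  unfolding neg_part_def by (intro comon_pos comon_uminus)

lemma Min_modular: assumes "comon x y" "S \<noteq> {}"
  shows "Min (x ` (S::'n::finite set)) + Min (y ` S) = Min ((\<lambda>j. min (x j) (y j)) ` S) + Min ((\<lambda>j. max (x j) (y j)) ` S)"
proof -
  have "Min ((\<lambda>i. x i + y i) ` S) \<in> (\<lambda>i. x i + y i) ` S" using assms(2) by (intro Min_in) auto
  then obtain j where j: "j \<in> S" "x j + y j = Min ((\<lambda>i. x i + y i) ` S)" by auto
  have le: "x j \<le> x i \<and> y j \<le> y i" if "i \<in> S" for i
  proof -
    have s: "x j + y j \<le> x i + y i" using j that by simp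
    have "\<not> x i < x j" using comon_le[OF assms(1), of i j] s by linarith
    moreover have "\<not> y i < y j"
      using comon_le[of y x i j] assms(1) s unfolding comon_def by (auto simp: mult.commute)
    ultimately show ?thesis by simp
  qed
  have "Min (x ` S) = x j" by (rule Min_eqI) (use le j in auto)
  moreover have "Min (y ` S) = y j" by (rule Min_eqI) (use le j in auto)
  moreover have "Min ((\<lambda>j. min (x j) (y j)) ` S) = min (x j) (y j)"
    by (rule Min_eqI) (use le j in \<open>auto intro!: min.mono\<close>)
  moreover have "Min ((\<lambda>j. max (x j) (y j)) ` S) = max (x j) (y j)"
    by (rule Min_eqI) (use le j in \<open>force simp: le_max_iff_disj\<close>)+
  ultimately show ?thesis by (simp add: min_def max_def)
qed

lemma LM_modular: assumes "comon x y"
  shows "LM \<psi> x + LM \<psi> y = LM \<psi> (\<lambda>j. min (x j) (y j)) + LM \<psi> (\<lambda>j. max (x j) ((y::'n::finite\<Rightarrow>real) j))"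
proof -
  have "(\<Sum>S\<in>{S. S \<noteq> {}}. mob \<psi> S * Min (x ` S)) + (\<Sum>S\<in>{S. S \<noteq> {}}. mob \<psi> S * Min (y ` S))
      = (\<Sum>S\<in>{S. S \<noteq> {}}. mob \<psi> S * (Min (x ` S) + Min (y ` S)))"
    by (simp add: sum.distrib distrib_left)
  also have "\<dots> = (\<Sum>S\<in>{S. S \<noteq> {}}. mob \<psi> S * (Min ((\<lambda>j. min (x j) (y j)) ` S) + Min ((\<lambda>j. max (x j) (y j)) ` S)))"
    by (rule sum.cong) (auto simp: Min_modular[OF assms])
  also have "\<dots> = (\<Sum>S\<in>{S. S \<noteq> {}}. mob \<psi> S * Min ((\<lambda>j. min (x j) (y j)) ` S)) + (\<Sum>S\<in>{S. S \<noteq> {}}. mob \<psi> S * Min ((\<lambda>j. max (x j) (y j)) ` S))"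
    by (simp add: sum.distrib distrib_left)
  finally show ?thesis by (simp add: LM_def)
qed

lemma mono_min: "mono_on I \<phi> \<Longrightarrow> a \<in> I \<Longrightarrow> b \<in> I \<Longrightarrow> \<phi> (min a b) = min (\<phi> a) (\<phi> (b::real)) \<and> \<phi> (max a b) = max (\<phi> a) ((\<phi> b)::real)"
  by (cases "a \<le> b") (auto simp: min_def max_def dest: mono_onD)

lemma CM_sym: assumes "mono_on I \<phi>"
  shows "comonotonic_modular I (\<lambda>x. sym_lovasz \<psi> (\<phi> \<circ> (x::'n::finite \<Rightarrow> real)))"
  unfolding comonotonic_modular_def
proof (intro allI impI)
  fix \<sigma> :: "nat \<Rightarrow> 'n" and x x' :: "'n \<Rightarrow> real"
  assume s: "perm_idx \<sigma>" and x: "x \<in> cube I \<inter> cone \<sigma>" and x': "x' \<in> cube I \<inter> cone \<sigma>"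
  have c: "comon (\<lambda>j. \<phi> (x j)) (\<lambda>j. \<phi> (x' j))"
    using comon_mono[OF cone_comon[OF s] _ _ assms] x x' by (auto simp: cube_def)
  define p where "p = pos_part (\<phi> \<circ> x)"
  define p' where "p' = pos_part (\<phi> \<circ> x')"
  define q where "q = neg_part (\<phi> \<circ> x)"
  define q' where "q' = neg_part (\<phi> \<circ> x')"
  have cp: "comon p p'" using comon_pos[OF c] by (simp add: p_def p'_def comp_def)
  have cq: "comon q q'" using comon_neg[OF c] by (simp add: q_def q'_def comp_def)
  have mm: "\<phi> (min (x j) (x' j)) = min (\<phi> (x j)) (\<phi> (x' j)) \<and> \<phi> (max (x j) (x' j)) = max (\<phi> (x j)) (\<phi> (x' j))" for j
    using mono_min[OF assms, of "x j" "x' j"] x x' by (auto simp: cube_def)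
  have e1: "pos_part (\<phi> \<circ> (\<lambda>j. min (x j) (x' j))) = (\<lambda>j. min (p j) (p' j))"
    using mm by (auto simp: p_def p'_def pos_part_def min_def max_def)
  have e2: "pos_part (\<phi> \<circ> (\<lambda>j. max (x j) (x' j))) = (\<lambda>j. max (p j) (p' j))"
    using mm by (auto simp: p_def p'_def pos_part_def min_def max_def)
  have e3: "neg_part (\<phi> \<circ> (\<lambda>j. min (x j) (x' j))) = (\<lambda>j. max (q j) (q' j))"
    using mm by (auto simp: q_def q'_def neg_part_def pos_part_def min_def max_def)
  have e4: "neg_part (\<phi> \<circ> (\<lambda>j. max (x j) (x' j))) = (\<lambda>j. min (q j) (q' j))"
    using mm by (auto simp: q_def q'_def neg_part_def pos_part_def min_def max_def)
  show "sym_lovasz \<psi> (\<phi> \<circ> x) + sym_lovasz \<psi> (\<phi> \<circ> x') =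
        sym_lovasz \<psi> (\<phi> \<circ> (\<lambda>j. min (x j) (x' j))) + sym_lovasz \<psi> (\<phi> \<circ> (\<lambda>j. max (x j) (x' j)))"
    unfolding sym_lovasz_def e1 e2 e3 e4 lovasz_eq
    using LM_modular[OF cp, of \<psi>] LM_modular[OF cq, of \<psi>]
    by (simp add: p_def p'_def q_def q'_def)
qed

lemma SL_ray: assumes "\<phi> 0 = 0"
  shows "sym_lovasz \<psi> (\<phi> \<circ> (\<lambda>j. t * ind (A::'n::finite set) j)) = \<psi> (ind {}) + \<phi> t * (\<psi> (ind A) - \<psi> (ind {}))"
proof -
  have e0: "\<phi> \<circ> (\<lambda>j. t * ind A j) = (\<lambda>j. \<phi> t * ind A j)"
    using assms by (auto simp: ind_def)
  have e1: "pos_part (\<lambda>j. \<phi> t * ind A j) = (\<lambda>j. max (\<phi> t) 0 * ind A j)"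
    by (auto simp: pos_part_def ind_def)
  have e2: "neg_part (\<lambda>j. \<phi> t * ind A j) = (\<lambda>j. max (- \<phi> t) 0 * ind A j)"
    by (auto simp: neg_part_def pos_part_def ind_def)
  have "max (\<phi> t) 0 - max (- \<phi> t) 0 = \<phi> t" by (simp add: max_def)
  then show ?thesis
    unfolding sym_lovasz_def e0 e1 e2 lovasz_eq LM_ray[OF max.cobounded2]
    by (simp add: algebra_simps)
qed

lemma CM_diff: fixes f g :: "('n::finite \<Rightarrow> real) \<Rightarrow> real" shows "comonotonic_modular I f \<Longrightarrow> comonotonic_modular I g \<Longrightarrow> comonotonic_modular I (\<lambda>x. f x - g x)"
  unfolding comonotonic_modular_def
proof (intro allI impI)
  fix \<sigma> :: "nat \<Rightarrow> 'n" and x x' :: "'n \<Rightarrow> real"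
  assume f: "\<forall>\<sigma> x x'. perm_idx \<sigma> \<longrightarrow> x \<in> cube I \<inter> cone \<sigma> \<longrightarrow> x' \<in> cube I \<inter> cone \<sigma> \<longrightarrow>
           f x + f x' = f (\<lambda>j. min (x j) (x' j)) + f (\<lambda>j. max (x j) (x' j))"
    and g: "\<forall>\<sigma> x x'. perm_idx \<sigma> \<longrightarrow> x \<in> cube I \<inter> cone \<sigma> \<longrightarrow> x' \<in> cube I \<inter> cone \<sigma> \<longrightarrow>
           g x + g x' = g (\<lambda>j. min (x j) (x' j)) + g (\<lambda>j. max (x j) (x' j))"
    and h: "perm_idx \<sigma>" "x \<in> cube I \<inter> cone \<sigma>" "x' \<in> cube I \<inter> cone \<sigma>"
  show "f x - g x + (f x' - g x') = f (\<lambda>j. min (x j) (x' j)) - g (\<lambda>j. min (x j) (x' j)) +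
          (f (\<lambda>j. max (x j) (x' j)) - g (\<lambda>j. max (x j) (x' j)))"
    using f[rule_format, OF h] g[rule_format, OF h] by linarith
qed


lemma CM_apply: "comonotonic_modular I f \<Longrightarrow> perm_idx \<sigma> \<Longrightarrow> x \<in> cube I \<inter> cone \<sigma> \<Longrightarrow> x' \<in> cube I \<inter> cone \<sigma> \<Longrightarrow>
   f x + f x' = f (\<lambda>j. min (x j) (x' j)) + f (\<lambda>j. max (x j) (x' j))"
  unfolding comonotonic_modular_def by blast

lemma U_pos:
  assumes "comonotonic_modular I h" "\<forall>t\<in>I. \<forall>A. h (\<lambda>j. t * ind A j) = 0" and I0: "0 \<in> I"
  shows "x \<in> cube I \<Longrightarrow> (\<forall>j. 0 \<le> x j) \<Longrightarrow> h (x::'n::finite \<Rightarrow> real) = 0"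
proof (induction "card (range x)" arbitrary: x rule: less_induct)
  case less
  define R where "R = range x"
  define v where "v = Max R"
  have fR: "finite R" "R \<noteq> {}" by (auto simp: R_def)
  have vR: "v \<in> R" using fR by (simp add: v_def)
  have xv: "x j \<le> v" for j using fR by (auto simp: v_def R_def)
  have vI: "v \<in> I" using vR less.prems by (auto simp: R_def cube_def)
  have v0: "0 \<le> v" using vR less.prems by (auto simp: R_def)
  define A where "A = {j. x j = v}"
  show "h x = 0"
  proof (cases "R - {v} = {}")
    case True
    then have "x = (\<lambda>j. v * ind UNIV j)" by (auto simp: R_def ind_def)
    then show ?thesis using assms(2) vI by simp
  next
    case False
    define w where "w = Max (R - {v})"
    have wR: "w \<in> R - {v}" unfolding w_def using False fR by (intro Max_in) auto
    have xw: "x j \<noteq> v \<Longrightarrow> x j \<le> w" for j using fR by (auto simp: w_def R_def)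
    have wv: "w < v" using wR xv by (auto simp: R_def less_le)
    have wI: "w \<in> I" using wR less.prems by (auto simp: R_def cube_def)
    have w0: "0 \<le> w" using wR less.prems by (auto simp: R_def)
    define u where "u = (\<lambda>j. min (x j) w)"
    define u' where "u' = (\<lambda>j. v * ind A j)"
    obtain \<sigma> where s: "perm_idx \<sigma>" "x \<in> cone \<sigma>" using sort_perm by blast
    have uc: "u \<in> cone \<sigma>" using s(2) unfolding cone_def u_def by (auto intro: min.coboundedI1)
    have u'c: "u' \<in> cone \<sigma>"
      unfolding cone_def
    proof (intro CollectI allI impI)
      fix i j :: nat assume ij: "1 \<le> i" "i \<le> j" "j \<le> CARD('n)"
      then have "x (\<sigma> i) \<le> x (\<sigma> j)" using s(2) by (auto simp: cone_def)
      then show "u' (\<sigma> i) \<le> u' (\<sigma> j)" using xv[of "\<sigma> j"] v0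
        by (auto simp: u'_def ind_def A_def)
    qed
    have ucube: "u \<in> cube I" using less.prems wI by (auto simp: cube_def u_def min_def)
    have u'cube: "u' \<in> cube I" using I0 vI by (auto simp: cube_def u'_def ind_def)
    have mn: "(\<lambda>j. min (u j) (u' j)) = (\<lambda>j. w * ind A j)"
    proof (rule ext)
      fix j
      show "min (u j) (u' j) = w * ind A j"
        using xw[of j] less.prems(2)[rule_format, of j] wv w0 by (auto simp: u_def u'_def ind_def A_def min_def)
    qed
    have mx: "(\<lambda>j. max (u j) (u' j)) = x"
    proof (rule ext)
      fix j
      show "max (u j) (u' j) = x j"
        using xw[of j] less.prems(2)[rule_format, of j] wv w0 by (auto simp: u_def u'_def ind_def A_def max_def min_def)
    qed
    have "h u + h u' = h (\<lambda>j. min (u j) (u' j)) + h (\<lambda>j. max (u j) (u' j))"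
      by (rule CM_apply[OF assms(1) s(1)]) (use uc u'c ucube u'cube in auto)
    then have eq: "h u + h u' = h (\<lambda>j. w * ind A j) + h x" by (simp only: mn mx)
    have "h u' = 0" using assms(2) vI by (simp add: u'_def)
    moreover have "h (\<lambda>j. w * ind A j) = 0" using assms(2) wI by simp
    ultimately have hux: "h u = h x" using eq by simp
    have "range u \<subseteq> R - {v}"
      using xw wR wv by (auto simp: u_def R_def min_def)
    then have "card (range u) \<le> card (R - {v})" using fR by (intro card_mono) auto
    also have "\<dots> < card R" using card_Diff1_less[OF fR(1) vR] .
    finally have "card (range u) < card (range x)" by (simp add: R_def)
    moreover have "\<forall>j. 0 \<le> u j" using less.prems wR by (auto simp: u_def R_def)
    ultimately have "h u = 0" using less.hyps ucube by blast
    then show ?thesis using hux by simp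
  qed
qed

lemma U_neg:
  assumes "comonotonic_modular I h" "\<forall>t\<in>I. \<forall>A. h (\<lambda>j. t * ind A j) = 0" and I0: "0 \<in> I"
  shows "x \<in> cube I \<Longrightarrow> (\<forall>j. x j \<le> 0) \<Longrightarrow> h (x::'n::finite \<Rightarrow> real) = 0"
proof (induction "card (range x)" arbitrary: x rule: less_induct)
  case less
  define R where "R = range x"
  define v where "v = Min R"
  have fR: "finite R" "R \<noteq> {}" by (auto simp: R_def)
  have vR: "v \<in> R" using fR by (simp add: v_def)
  have xv: "v \<le> x j" for j using fR by (auto simp: v_def R_def)
  have vI: "v \<in> I" using vR less.prems by (auto simp: R_def cube_def)
  have v0: "v \<le> 0" using vR less.prems by (auto simp: R_def)
  define A where "A = {j. x j = v}"
  show "h x = 0"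
  proof (cases "R - {v} = {}")
    case True
    then have "x = (\<lambda>j. v * ind UNIV j)" by (auto simp: R_def ind_def)
    then show ?thesis using assms(2) vI by simp
  next
    case False
    define w where "w = Min (R - {v})"
    have wR: "w \<in> R - {v}" unfolding w_def using False fR by (intro Min_in) auto
    have xw: "x j \<noteq> v \<Longrightarrow> w \<le> x j" for j using fR by (auto simp: w_def R_def)
    have wv: "v < w" using wR xv by (auto simp: R_def less_le)
    have wI: "w \<in> I" using wR less.prems by (auto simp: R_def cube_def)
    have w0: "w \<le> 0" using wR less.prems by (auto simp: R_def)
    define u where "u = (\<lambda>j. max (x j) w)"
    define u' where "u' = (\<lambda>j. v * ind A j)"
    obtain \<sigma> where s: "perm_idx \<sigma>" "x \<in> cone \<sigma>" using sort_perm by blast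
    have uc: "u \<in> cone \<sigma>" using s(2) unfolding cone_def u_def by (auto intro: max.coboundedI1)
    have u'c: "u' \<in> cone \<sigma>"
      unfolding cone_def
    proof (intro CollectI allI impI)
      fix i j :: nat assume ij: "1 \<le> i" "i \<le> j" "j \<le> CARD('n)"
      then have "x (\<sigma> i) \<le> x (\<sigma> j)" using s(2) by (auto simp: cone_def)
      then show "u' (\<sigma> i) \<le> u' (\<sigma> j)" using xv[of "\<sigma> i"] v0
        by (auto simp: u'_def ind_def A_def)
    qed
    have ucube: "u \<in> cube I" using less.prems wI by (auto simp: cube_def u_def max_def)
    have u'cube: "u' \<in> cube I" using I0 vI by (auto simp: cube_def u'_def ind_def)
    have mn: "(\<lambda>j. min (u j) (u' j)) = x"
    proof (rule ext)
      fix j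
      show "min (u j) (u' j) = x j"
        using xw[of j] less.prems(2)[rule_format, of j] wv w0 by (auto simp: u_def u'_def ind_def A_def min_def max_def)
    qed
    have mx: "(\<lambda>j. max (u j) (u' j)) = (\<lambda>j. w * ind A j)"
    proof (rule ext)
      fix j
      show "max (u j) (u' j) = w * ind A j"
        using xw[of j] less.prems(2)[rule_format, of j] wv w0 by (auto simp: u_def u'_def ind_def A_def max_def)
    qed
    have "h u + h u' = h (\<lambda>j. min (u j) (u' j)) + h (\<lambda>j. max (u j) (u' j))"
      by (rule CM_apply[OF assms(1) s(1)]) (use uc u'c ucube u'cube in auto)
    then have eq: "h u + h u' = h x + h (\<lambda>j. w * ind A j)" by (simp only: mn mx)
    have "h u' = 0" using assms(2) vI by (simp add: u'_def)
    moreover have "h (\<lambda>j. w * ind A j) = 0" using assms(2) wI by simp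
    ultimately have hux: "h u = h x" using eq by simp
    have "range u \<subseteq> R - {v}"
      using xw wR wv by (auto simp: u_def R_def max_def)
    then have "card (range u) \<le> card (R - {v})" using fR by (intro card_mono) auto
    also have "\<dots> < card R" using card_Diff1_less[OF fR(1) vR] .
    finally have "card (range u) < card (range x)" by (simp add: R_def)
    moreover have "\<forall>j. u j \<le> 0" using less.prems wR by (auto simp: u_def R_def)
    ultimately have "h u = 0" using less.hyps ucube by blast
    then show ?thesis using hux by simp
  qed
qed

lemma U:
  fixes f g :: "('n::finite \<Rightarrow> real) \<Rightarrow> real"
  assumes "0 \<in> I" "comonotonic_modular I f" "comonotonic_modular I g"
    "\<forall>t\<in>I. \<forall>A. f (\<lambda>j. t * ind A j) = g (\<lambda>j. t * ind A j)"
  shows "\<forall>x\<in>cube I. f x = g x"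
proof
  fix x :: "'n \<Rightarrow> real" assume x: "x \<in> cube I"
  define h where "h = (\<lambda>x. f x - g x)"
  have hc: "comonotonic_modular I h" unfolding h_def by (rule CM_diff[OF assms(2,3)])
  have h0: "\<forall>t\<in>I. \<forall>A. h (\<lambda>j. t * ind A j) = 0" using assms(4) by (simp add: h_def)
  obtain \<sigma> where s: "perm_idx \<sigma>" "x \<in> cone \<sigma>" using sort_perm by blast
  define z where "z = (\<lambda>j::'n. 0::real)"
  have zc: "z \<in> cone \<sigma>" "z \<in> cube I" using assms(1) by (auto simp: z_def cone_def cube_def)
  have "h x + h z = h (\<lambda>j. min (x j) (z j)) + h (\<lambda>j. max (x j) (z j))"
    by (rule CM_apply[OF hc s(1)]) (use s x zc in auto)
  moreover have "h z = 0" using h0[rule_format, OF assms(1), of "{}"] by (simp add: z_def)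
  moreover have "h (\<lambda>j. min (x j) (z j)) = 0"
    by (rule U_neg[OF hc h0 assms(1)]) (use x assms(1) in \<open>auto simp: cube_def z_def min_def\<close>)
  moreover have "h (\<lambda>j. max (x j) (z j)) = 0"
    by (rule U_pos[OF hc h0 assms(1)]) (use x assms(1) in \<open>auto simp: cube_def z_def max_def\<close>)
  ultimately show "f x = g x" by (simp add: h_def)
qed



lemma phi0: "odd_on I \<phi> \<Longrightarrow> 0 \<in> I \<Longrightarrow> \<phi> 0 = (0::real)"
  unfolding odd_on_def by (metis add.inverse_neutral neg_equal_zero)

lemma ind_empty: "ind {} = (\<lambda>j. 0)" by (simp add: ind_def)
lemma ind_ray1: "(\<lambda>j. 1 * ind A j) = ind A" by simp
lemma ind_ray0: "(\<lambda>j. 0 * ind A j) = ind {}" by (simp add: ind_def)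

lemma ray_cube: "t \<in> I \<Longrightarrow> 0 \<in> I \<Longrightarrow> (\<lambda>j. t * ind A j) \<in> cube I"
  by (auto simp: cube_def ind_def)

lemma CM_cong:
  fixes f g :: "('n::finite \<Rightarrow> real) \<Rightarrow> real"
  assumes "\<forall>x\<in>cube I. f x = g x" "comonotonic_modular I g"
  shows "comonotonic_modular I f"
  unfolding comonotonic_modular_def
proof (intro allI impI)
  fix \<sigma> :: "nat \<Rightarrow> 'n" and x x' :: "'n \<Rightarrow> real"
  assume h: "perm_idx \<sigma>" "x \<in> cube I \<inter> cone \<sigma>" "x' \<in> cube I \<inter> cone \<sigma>"
  have c: "(\<lambda>j. min (x j) (x' j)) \<in> cube I" "(\<lambda>j. max (x j) (x' j)) \<in> cube I"
    using h by (auto simp: cube_def min_def max_def)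
  show "f x + f x' = f (\<lambda>j. min (x j) (x' j)) + f (\<lambda>j. max (x j) (x' j))"
    using CM_apply[OF assms(2) h] assms(1) c h by simp
qed

lemma CM_const: "comonotonic_modular I (\<lambda>x. c)"
  by (simp add: comonotonic_modular_def)

lemma ii_to_iii:
  fixes f :: "('n::finite \<Rightarrow> real) \<Rightarrow> real"
  assumes I0: "0 \<in> I" and I1: "1 \<in> I"
    and nc: "nonconst_on f (cube (I \<inter> {0..})) \<or> nonconst_on f (cube (I \<inter> {..0}))"
    and cm: "comonotonic_modular I f" and oh: "oddly_homogeneous I (f0 f)"
  shows "(\<exists>\<phi>. mono_on I \<phi> \<and> odd_on I \<phi> \<and> \<phi> 1 = 1 \<and> (\<forall>x\<in>cube I. f x = sym_lovasz f (\<phi> \<circ> x)))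
         \<and> (\<exists>A. f0 f (ind A) \<noteq> 0)"
proof -
  obtain \<phi> where \<phi>: "mono_on I \<phi>" "odd_on I \<phi>"
      "\<forall>x\<in>I. \<forall>A. f0 f (\<lambda>j. x * ind A j) = \<phi> x * f0 f (ind A)"
    using oh unfolding oddly_homogeneous_def by blast
  have p0: "\<phi> 0 = 0" by (rule phi0[OF \<phi>(2) I0])
  have fray: "f (\<lambda>j. t * ind A j) = f (ind {}) + \<phi> t * f0 f (ind A)" if "t \<in> I" for t A
    using \<phi>(3) that by (simp add: f0_def algebra_simps)
  have eqF: "\<forall>x\<in>cube I. f x = sym_lovasz f (\<phi> \<circ> x)"
  proof (rule U[OF I0 cm CM_sym[OF \<phi>(1)]], intro ballI allI)
    fix t A assume t: "t \<in> I"
    show "f (\<lambda>j. t * ind A j) = sym_lovasz f (\<phi> \<circ> (\<lambda>j. t * ind A j))"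
      using fray[OF t, of A] SL_ray[where \<phi>=\<phi>, OF p0, of f t A] by (simp add: f0_def)
  qed
  have exA: "\<exists>A. f0 f (ind A) \<noteq> 0"
  proof (rule ccontr)
    assume "\<not> (\<exists>A. f0 f (ind A) \<noteq> 0)"
    then have z: "\<forall>A. f0 f (ind A) = 0" by simp
    have cst: "\<forall>x\<in>cube I. f x = (\<lambda>x. f (ind {})) x"
      by (rule U[OF I0 cm CM_const]) (use fray z in simp)
    have "\<not> nonconst_on f S" if "S \<subseteq> cube I" for S unfolding nonconst_on_def using that cst by (auto simp: subset_iff)
    moreover have "cube (I \<inter> {0..}) \<subseteq> cube I" "cube (I \<inter> {..0}) \<subseteq> cube I" by (auto simp: cube_def)
    ultimately show False using nc by blast
  qed
  then obtain A where A: "f0 f (ind A) \<noteq> 0" by blast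
  have "f0 f (ind A) = \<phi> 1 * f0 f (ind A)" using \<phi>(3) I1 ind_ray1[of A] by metis
  then have "\<phi> 1 = 1" using A by simp
  then show ?thesis using \<phi> eqF exA by blast
qed

lemma i_to_ii:
  fixes f :: "('n::finite \<Rightarrow> real) \<Rightarrow> real"
  assumes I0: "0 \<in> I" and I1: "1 \<in> I" and sq: "sym_quasi_lovasz I f" and A0: "f0 f (ind A0) \<noteq> 0"
  shows "comonotonic_modular I f \<and> oddly_homogeneous I (f0 f)"
proof -
  obtain \<psi> \<phi> where \<phi>: "mono_on I \<phi>" "odd_on I \<phi>" "\<forall>x\<in>cube I. f x = sym_lovasz \<psi> (\<phi> \<circ> x)"
    using sq unfolding sym_quasi_lovasz_def by blast
  have p0: "\<phi> 0 = 0" by (rule phi0[OF \<phi>(2) I0])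
  have fray: "f (\<lambda>j. t * ind A j) = \<psi> (ind {}) + \<phi> t * (\<psi> (ind A) - \<psi> (ind {}))" if "t \<in> I" for t A
    using \<phi>(3) ray_cube[OF that I0, of A] SL_ray[where \<phi>=\<phi>, OF p0, of \<psi> t A] by simp
  have f00: "f (ind {}) = \<psi> (ind {})" using fray[OF I0, of "{}"] p0 by (simp add: ind_empty)
  have f0ray: "f0 f (\<lambda>j. t * ind A j) = \<phi> t * (\<psi> (ind A) - \<psi> (ind {}))" if "t \<in> I" for t A
    using fray[OF that] f00 by (simp add: f0_def)
  have f01: "f0 f (ind A) = \<phi> 1 * (\<psi> (ind A) - \<psi> (ind {}))" for A
    using f0ray[OF I1, of A] by simp
  have "\<phi> 1 \<noteq> 0" using A0 f01[of A0] by auto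
  moreover have "0 \<le> \<phi> 1" using mono_onD[OF \<phi>(1) I0 I1] p0 by simp
  ultimately have pos: "0 < \<phi> 1" by simp
  have cm: "comonotonic_modular I f" by (rule CM_cong[OF \<phi>(3) CM_sym[OF \<phi>(1)]])
  have "oddly_homogeneous I (f0 f)"
    unfolding oddly_homogeneous_def
  proof (rule exI[of _ "\<lambda>t. \<phi> t / \<phi> 1"], intro conjI ballI allI)
    show "mono_on I (\<lambda>t. \<phi> t / \<phi> 1)"
      by (rule mono_onI) (use pos mono_onD[OF \<phi>(1)] in \<open>auto intro: divide_right_mono\<close>)
    show "odd_on I (\<lambda>t. \<phi> t / \<phi> 1)" using \<phi>(2) by (simp add: odd_on_def)
    fix t A assume t: "t \<in> I"
    show "f0 f (\<lambda>j. t * ind A j) = \<phi> t / \<phi> 1 * f0 f (ind A)"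
      using f0ray[OF t, of A] f01[of A] pos by simp
  qed
  then show ?thesis using cm by simp
qed

lemma iii_to_ii:
  fixes f :: "('n::finite \<Rightarrow> real) \<Rightarrow> real"
  assumes I0: "0 \<in> I" and \<phi>: "mono_on I \<phi>" "odd_on I \<phi>" "\<forall>x\<in>cube I. f x = sym_lovasz f (\<phi> \<circ> x)"
  shows "comonotonic_modular I f \<and> oddly_homogeneous I (f0 f)"
proof -
  have p0: "\<phi> 0 = 0" by (rule phi0[OF \<phi>(2) I0])
  have cm: "comonotonic_modular I f" by (rule CM_cong[OF \<phi>(3) CM_sym[OF \<phi>(1)]])
  have "oddly_homogeneous I (f0 f)"
    unfolding oddly_homogeneous_def
  proof (rule exI[of _ \<phi>], intro conjI ballI allI)
    show "mono_on I \<phi>" "odd_on I \<phi>" using \<phi> by auto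
    fix t A assume t: "t \<in> I"
    show "f0 f (\<lambda>j. t * ind A j) = \<phi> t * f0 f (ind A)"
      using \<phi>(3) ray_cube[OF t I0, of A] SL_ray[where \<phi>=\<phi>, OF p0, of f t A] by (simp add: f0_def)
  qed
  then show ?thesis using cm by simp
qed

theorem theorem18:
  fixes I :: "real set" and f :: "('n::finite \<Rightarrow> real) \<Rightarrow> real"
  assumes "is_interval I" and "\<forall>x\<in>I. - x \<in> I" and "{-1..1} \<subseteq> I"
    and "nonconst_on f (cube (I \<inter> {0..})) \<or> nonconst_on f (cube (I \<inter> {..0}))"
  shows "((sym_quasi_lovasz I f \<and> (\<exists>A. f0 f (ind A) \<noteq> 0))
            \<longleftrightarrow> (comonotonic_modular I f \<and> oddly_homogeneous I (f0 f)))
       \<and> ((comonotonic_modular I f \<and> oddly_homogeneous I (f0 f))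
            \<longleftrightarrow> (\<exists>\<phi>. mono_on I \<phi> \<and> odd_on I \<phi> \<and> \<phi> 1 = 1 \<and>
                    (\<forall>x\<in>cube I. f x = sym_lovasz f (\<phi> \<circ> x))))"
proof -
  have I0: "0 \<in> I" and I1: "1 \<in> I" using assms(3) by auto
  show ?thesis
  proof (rule conjI; rule iffI)
    assume "sym_quasi_lovasz I f \<and> (\<exists>A. f0 f (ind A) \<noteq> 0)"
    then show "comonotonic_modular I f \<and> oddly_homogeneous I (f0 f)"
      using i_to_ii[OF I0 I1] by blast
  next
    assume h: "comonotonic_modular I f \<and> oddly_homogeneous I (f0 f)"
    from ii_to_iii[OF I0 I1 assms(4)] h obtain \<phi> where
      "mono_on I \<phi>" "odd_on I \<phi>" "\<forall>x\<in>cube I. f x = sym_lovasz f (\<phi> \<circ> x)" and ex: "\<exists>A. f0 f (ind A) \<noteq> 0"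
      by blast
    then show "sym_quasi_lovasz I f \<and> (\<exists>A. f0 f (ind A) \<noteq> 0)"
      unfolding sym_quasi_lovasz_def by blast
  next
    assume h: "comonotonic_modular I f \<and> oddly_homogeneous I (f0 f)"
    then show "\<exists>\<phi>. mono_on I \<phi> \<and> odd_on I \<phi> \<and> \<phi> 1 = 1 \<and> (\<forall>x\<in>cube I. f x = sym_lovasz f (\<phi> \<circ> x))"
      using ii_to_iii[OF I0 I1 assms(4)] by blast
  next
    assume "\<exists>\<phi>. mono_on I \<phi> \<and> odd_on I \<phi> \<and> \<phi> 1 = 1 \<and> (\<forall>x\<in>cube I. f x = sym_lovasz f (\<phi> \<circ> x))"
    then show "comonotonic_modular I f \<and> oddly_homogeneous I (f0 f)"
      using iii_to_ii[OF I0] by blast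
  qed
qed

end
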